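(* Let $p,q,r$ be pairwise distinct primes with $p<q$ and $p<r$, and let $n$ be an integer with $1\le n<pqr$. For a finite sequence $(t_1,\dots,t_l)$ and $d\in\{0,1,2\}$ let $N_d(t_1,\dots,t_l)$ be the number of indices $i$ with $t_i=d$. Put $S_+=(F_n,F_{n-p-q},F_{n-q-r},F_{n-r-p})$ and $S_-=(F_{n-p},F_{n-q},F_{n-r},F_{n-p-q-r})$. Then $$a_{pqr}(n)-a_{pqr}(n-1)=\tfrac12\big(N_1(S_-)-N_1(S_+)\big)=N_0(S_+)-N_0(S_-)=N_2(S_+)-N_2(S_-).$$
   Context: $\Phi_{pqr}(x)=\prod_{0<k<pqr,\ \gcd(k,pqr)=1}(x-\zeta^k)$, $\zeta$ a primitive $pqr$-th root of unity, with coefficients $a_{pqr}(n)$ (zero outside $[0,\deg\Phi_{pqr}]$). For each integer $k$, let $a_k,b_k,c_k$ be the unique integers with $0\le a_k<p$, $0\le b_k<q$, $0\le c_k<r$ and $k\equiv a_kqr+b_krp+c_kpq \pmod{pqr}$, and define $F_k=\frac{a_k}{p}+\frac{b_k}{q}+\frac{c_k}{r}-\frac{k}{pqr}$. *)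

theory Defs
  imports Complex_Main "HOL-Computational_Algebra.Polynomial" "HOL-Number_Theory.Cong"
begin

definition cyclo :: "nat \<Rightarrow> complex poly" where
  "cyclo m = (\<Prod>k\<in>{k. 0 < k \<and> k < m \<and> coprime k m}. [:- ((cis (2 * pi / real m)) ^ k), 1:])"

definition cyc_coeff :: "nat \<Rightarrow> nat \<Rightarrow> complex" where
  "cyc_coeff m n = coeff (cyclo m) n"

definition abc :: "nat \<Rightarrow> nat \<Rightarrow> nat \<Rightarrow> int \<Rightarrow> int \<times> int \<times> int" where
  "abc p q r k = (THE (a, b, c). 0 \<le> a \<and> a < int p \<and> 0 \<le> b \<and> b < int q \<and> 0 \<le> c \<and> c < int r \<and>
      [k = a * int q * int r + b * int r * int p + c * int p * int q] (mod int (p * q * r)))"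

definition Fk :: "nat \<Rightarrow> nat \<Rightarrow> nat \<Rightarrow> int \<Rightarrow> real" where
  "Fk p q r k = (case abc p q r k of (a, b, c) \<Rightarrow>
      real_of_int a / real p + real_of_int b / real q + real_of_int c / real r
      - real_of_int k / real (p * q * r))"

definition Ncount :: "real \<Rightarrow> real list \<Rightarrow> nat" where
  "Ncount d ts = length (filter (\<lambda>t. t = d) ts)"

end

theory Submission
  imports Defs "HOL-Computational_Algebra.Fundamental_Theorem_Algebra"
begin


lemma coprime_int_primes:
  fixes P Q :: nat assumes "prime P" "prime Q" "P \<noteq> Q"
  shows "coprime (int P) (int Q)"
  using assms by (simp add: primes_coprime)

lemma ex_a:
  fixes P Q R :: nat and k :: int
  assumes "prime P" "prime Q" "prime R" "P \<noteq> Q" "P \<noteq> R"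
  shows "\<exists>a. 0 \<le> a \<and> a < int P \<and> [k = a * int Q * int R] (mod int P)"
proof -
  have "coprime (int Q * int R) (int P)"
    using assms coprime_int_primes by (metis coprime_commute coprime_mult_left_iff)
  then obtain x where x: "[int Q * int R * x = 1] (mod int P)"
    using cong_solve_coprime_int by blast
  define a where "a = (k * x) mod int P"
  have P0: "int P > 0" using assms prime_gt_0_nat by simp
  have "[a * int Q * int R = k * x * (int Q * int R)] (mod int P)"
    unfolding a_def by (metis cong_mod_left cong_refl cong_scalar_right mult.assoc)
  also have "[k * x * (int Q * int R) = k * 1] (mod int P)"
    using x by (metis cong_scalar_left mult.assoc mult.commute)
  finally have "[k = a * int Q * int R] (mod int P)" by (simp add: cong_sym)
  moreover have "0 \<le> a" "a < int P" unfolding a_def using P0 by auto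
  ultimately show ?thesis by blast
qed

lemma uniq_a:
  fixes P Q R :: nat and a a' :: int
  assumes "prime P" "prime Q" "prime R" "P \<noteq> Q" "P \<noteq> R"
    and "0 \<le> a" "a < int P" "0 \<le> a'" "a' < int P"
    and "[a * int Q * int R = a' * int Q * int R] (mod int P)"
  shows "a = a'"
proof -
  have "int P dvd (a - a') * (int Q * int R)"
    using assms(10) by (simp add: cong_iff_dvd_diff algebra_simps)
  moreover have "\<not> int P dvd int Q * int R"
  proof
    assume "int P dvd int Q * int R"
    hence "P dvd Q * R" by (metis of_nat_dvd_iff of_nat_mult)
    hence "P dvd Q \<or> P dvd R" using assms(1) prime_dvd_mult_iff by blast
    thus False using assms primes_dvd_imp_eq by blast
  qed
  moreover have "prime (int P)" using assms(1) by simp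
  ultimately have "int P dvd (a - a')" using prime_dvd_mult_iff by blast
  moreover have "\<bar>a - a'\<bar> < int P" using assms by auto
  ultimately show ?thesis
    by (metis dvd_imp_le_int abs_of_nat linorder_not_less eq_iff_diff_eq_0)
qed


locale trip =
  fixes p q r :: nat
  assumes pp: "prime p" and pq: "prime q" and pr: "prime r"
    and dpq: "p \<noteq> q" and dqr: "q \<noteq> r" and dpr: "p \<noteq> r"
begin

definition Sx :: "int \<times> int \<times> int \<Rightarrow> int" where
  "Sx t = (case t of (a,b,c) \<Rightarrow> a * int q * int r + b * int r * int p + c * int p * int q)"

definition inR :: "int \<times> int \<times> int \<Rightarrow> bool" where
  "inR t = (case t of (a,b,c) \<Rightarrow> 0 \<le> a \<and> a < int p \<and> 0 \<le> b \<and> b < int q \<and> 0 \<le> c \<and> c < int r)"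

lemma mpos: "int (p*q*r) = int p * int q * int r" by simp

lemma cong_pqr:
  assumes "[x = y] (mod int p)" "[x = y] (mod int q)" "[x = y] (mod int r)"
  shows "[x = y] (mod int (p*q*r))"
proof -
  have c1: "coprime (int p) (int q)" "coprime (int p * int q) (int r)"
    using pp pq pr dpq dqr dpr coprime_int_primes
    by (auto simp: coprime_mult_left_iff)
  show ?thesis unfolding mpos
    by (meson assms c1 coprime_cong_mult)
qed

lemma Sx_mod:
  "[Sx (a,b,c) = a * int q * int r] (mod int p)"
  "[Sx (a,b,c) = b * int r * int p] (mod int q)"
  "[Sx (a,b,c) = c * int p * int q] (mod int r)"
  unfolding Sx_def by (auto simp: cong_iff_dvd_diff)

lemma abc_ex1: "\<exists>!t. inR t \<and> [k = Sx t] (mod int (p*q*r))"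
proof -
  obtain a where a: "0 \<le> a" "a < int p" "[k = a * int q * int r] (mod int p)"
    using ex_a[OF pp pq pr dpq dpr] by blast
  obtain b where b: "0 \<le> b" "b < int q" "[k = b * int r * int p] (mod int q)"
    using ex_a[OF pq pr pp dqr] dpq by metis
  obtain c where c: "0 \<le> c" "c < int r" "[k = c * int p * int q] (mod int r)"
    using ex_a[OF pr pp pq] dpr dqr by metis
  have "[k = Sx (a,b,c)] (mod int (p*q*r))"
    apply (rule cong_pqr)
    using a b c Sx_mod[of a b c] by (meson cong_sym cong_trans)+
  moreover have "inR (a,b,c)" using a b c by (simp add: inR_def)
  moreover have "t = (a,b,c)" if "inR t" "[k = Sx t] (mod int (p*q*r))" for t
  proof -
    obtain a' b' c' where t: "t = (a',b',c')" by (cases t) auto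
    have m: "[k = Sx t] (mod int p)" "[k = Sx t] (mod int q)" "[k = Sx t] (mod int r)"
      using that(2) unfolding mpos by (metis cong_modulus_mult mult.commute mult.assoc)+
    have "a' = a" apply (rule uniq_a[OF pp pq pr dpq dpr])
      using that(1) t a m Sx_mod[of a' b' c'] by (auto simp: inR_def intro: cong_trans cong_sym)
      (meson cong_sym cong_trans)
    moreover have "b' = b" apply (rule uniq_a[OF pq pr pp dqr]) using dpq
      using that(1) t b m Sx_mod[of a' b' c'] by (auto simp: inR_def)
      (meson cong_sym cong_trans)
    moreover have "c' = c" apply (rule uniq_a[OF pr pp pq]) using dpr dqr
      using that(1) t c m Sx_mod[of a' b' c'] by (auto simp: inR_def)
      (meson cong_sym cong_trans)
    ultimately show ?thesis using t by simp
  qed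
  ultimately show ?thesis by blast
qed

lemma abc_alt: "abc p q r k = (THE t. inR t \<and> [k = Sx t] (mod int (p*q*r)))"
  unfolding abc_def inR_def Sx_def
  by (rule arg_cong[where f=The], rule ext) (auto split: prod.splits)

lemma abc_spec: "inR (abc p q r k)" "[k = Sx (abc p q r k)] (mod int (p*q*r))"
  using theI'[OF abc_ex1[of k]] unfolding abc_alt by auto

end



lemma xe_rsf:
  assumes "e > 0"
  shows "rsquarefree (monom (1::complex) e - 1)"
  unfolding rsquarefree_roots
proof (intro allI notI)
  fix a :: complex
  assume h: "poly (monom 1 e - 1) a = 0 \<and> poly (pderiv (monom 1 e - 1)) a = 0"
  hence "a ^ e = 1" by (simp add: poly_monom)
  hence "a \<noteq> 0" using assms by (metis power_0_left zero_neq_one gr_implies_not0)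
  moreover have "of_nat e * a ^ (e - 1) = 0" using h by (simp add: pderiv_monom poly_monom pderiv_diff)
  ultimately show False using assms by simp
qed

lemma xe_prod:
  assumes "e > 0"
  shows "(\<Prod>j<e. [:- cis (2 * pi * real j / real e), 1:]) = monom (1::complex) e - 1"
proof -
  let ?P = "monom (1::complex) e - 1"
  have dg: "degree ?P = e"
  proof (rule antisym)
    show "degree ?P \<le> e" by (rule degree_diff_le) (auto simp: degree_monom_le)
    have "coeff ?P e \<noteq> 0" using assms by simp
    thus "e \<le> degree ?P" by (rule le_degree)
  qed
  have lc: "lead_coeff ?P = 1"
    using assms dg by simp
  have roots: "{z. poly ?P z = 0} = {z. z ^ e = 1}" by (simp add: poly_monom)
  have "?P = smult (lead_coeff ?P) (\<Prod>z|poly ?P z = 0. [:-z, 1:])"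
    using complex_poly_decompose_rsquarefree[OF xe_rsf[OF assms]] by simp
  also have "\<dots> = (\<Prod>z|z ^ e = 1. [:-z, 1:])" using lc roots by simp
  also have "\<dots> = (\<Prod>j<e. [:- cis (2 * pi * real j / real e), 1:])"
    using prod.reindex_bij_betw[OF bij_betw_roots_unity[OF assms], of "\<lambda>z. [:-z,1:]"] by simp
  finally show ?thesis by simp
qed



lemma sub_prod:
  fixes m s :: nat
  assumes "m > 0" "s > 0" "s dvd m"
  shows "(\<Prod>k\<in>{k. k < m \<and> s dvd k}. [:- (cis (2 * pi / real m) ^ k), 1:]) = monom (1::complex) (m div s) - 1"
proof -
  define e where "e = m div s"
  have me: "m = s * e" using assms e_def by simp
  have e0: "e > 0" using assms me by (metis gr0I mult_0_right)
  have set: "{k. k < m \<and> s dvd k} = (\<lambda>j. s * j) ` {..<e}"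
  proof (intro set_eqI iffI)
    fix k assume "k \<in> {k. k < m \<and> s dvd k}"
    hence "k < m" "s dvd k" by auto
    then obtain j where j: "k = s * j" by auto
    moreover have "j < e" using \<open>k < m\<close> me j assms(2) by simp
    ultimately show "k \<in> (\<lambda>j. s * j) ` {..<e}" by blast
  next
    fix k assume "k \<in> (\<lambda>j. s * j) ` {..<e}"
    thus "k \<in> {k. k < m \<and> s dvd k}" using me assms(2) by auto
  qed
  have inj: "inj_on (\<lambda>j. s * j) {..<e}" using assms(2) by (auto simp: inj_on_def)
  have eq: "cis (2 * pi / real m) ^ (s * j) = cis (2 * pi * real j / real e)" for j
  proof -
    have "cis (2 * pi / real m) ^ (s * j) = cis (real (s * j) * (2 * pi / real m))"
      by (simp add: DeMoivre)
    also have "real (s * j) * (2 * pi / real m) = 2 * pi * real j / real e"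
      using me assms(2) e0 by (simp add: field_simps)
    finally show ?thesis .
  qed
  have "(\<Prod>k\<in>{k. k < m \<and> s dvd k}. [:- (cis (2 * pi / real m) ^ k), 1:])
        = (\<Prod>j<e. [:- cis (2 * pi * real j / real e), 1:])"
    unfolding set by (subst prod.reindex[OF inj]) (simp add: eq)
  also have "\<dots> = monom 1 e - 1" by (rule xe_prod[OF e0])
  finally show ?thesis unfolding e_def .
qed

lemma prod_filter_pow:
  fixes g :: "nat \<Rightarrow> 'a::comm_monoid_mult"
  shows "(\<Prod>k\<in>{k. k < m \<and> P k}. g k) = (\<Prod>k<m. g k ^ (if P k then 1 else 0))"
proof -
  have "(\<Prod>k<m. g k ^ (if P k then 1 else 0)) = (\<Prod>k<m. if P k then g k else 1)"
    by (rule prod.cong) auto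
  also have "\<dots> = prod g {k\<in>{..<m}. P k}" by (rule prod.inter_filter[symmetric]) simp
  also have "{k\<in>{..<m}. P k} = {k. k < m \<and> P k}" by auto
  finally show ?thesis by simp
qed

lemma cop_prime:
  fixes P k :: nat assumes "prime P" shows "coprime k P \<longleftrightarrow> \<not> P dvd k"
  using assms by (meson coprime_commute prime_imp_coprime not_prime_unit coprime_common_divisor dvd_refl)

lemma cyclo_identity:
  fixes p q r :: nat
  assumes "prime p" "prime q" "prime r" "p \<noteq> q" "q \<noteq> r" "p \<noteq> r"
  defines "m \<equiv> p * q * r"
  defines "XX \<equiv> \<lambda>e. monom (1::complex) e - 1"
  shows "cyclo m * XX (q*r) * XX (r*p) * XX (p*q) * XX 1 = XX m * XX r * XX p * XX q"
proof -
  define f where "f k = [:- (cis (2 * pi / real m) ^ k), 1:]" for k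
  have p0: "p > 0" "q > 0" "r > 0" using assms prime_gt_0_nat by auto
  have pm: "p \<le> m" unfolding m_def mult.assoc using mult_le_mono2[of 1 "q*r" p] p0 by simp
  have m0: "m > 0" "m > 1" using pm prime_gt_1_nat[OF assms(1)] by linarith+
  have XXs: "XX (m div s) = (\<Prod>k<m. f k ^ (if s dvd k then 1 else 0))"
    if "s > 0" "s dvd m" for s
    using sub_prod[OF m0(1) that] prod_filter_pow[of f m "\<lambda>k. s dvd k"]
    unfolding XX_def f_def by simp
  have cop: "coprime k m \<longleftrightarrow> \<not> p dvd k \<and> \<not> q dvd k \<and> \<not> r dvd k" for k
    unfolding m_def using assms(1-3)
    by (simp add: coprime_mult_right_iff cop_prime)
  have cop2: "coprime x y" if "x \<in> {p,q,r}" "y \<in> {p,q,r}" "x \<noteq> y" for x y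
    using that assms(1-6) primes_coprime by auto
  have d2: "a * b dvd k \<longleftrightarrow> a dvd k \<and> b dvd k" if "coprime a b" for a b k :: nat
  proof
    assume "a * b dvd k" thus "a dvd k \<and> b dvd k" using dvd_mult_left dvd_mult_right by blast
  next
    assume "a dvd k \<and> b dvd k" thus "a * b dvd k" using divides_mult[of a k b] that by simp
  qed
  have dpq: "p * q dvd k \<longleftrightarrow> p dvd k \<and> q dvd k"
   and dqr: "q * r dvd k \<longleftrightarrow> q dvd k \<and> r dvd k"
   and drp: "r * p dvd k \<longleftrightarrow> r dvd k \<and> p dvd k" for k
    using d2 cop2 assms by auto
  have dm: "m dvd k \<longleftrightarrow> p dvd k \<and> q dvd k \<and> r dvd k" for k
  proof -
    have "coprime (p*q) r" using cop2 assms by (simp add: coprime_mult_left_iff)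
    thus ?thesis unfolding m_def using d2 dpq by metis
  qed
  have cyc: "cyclo m = (\<Prod>k<m. f k ^ (if coprime k m then 1 else 0))"
  proof -
    have "{k. 0 < k \<and> k < m \<and> coprime k m} = {k. k < m \<and> coprime k m}"
      using m0 by (auto intro: Nat.gr0I)
    thus ?thesis unfolding cyclo_def f_def using prod_filter_pow[of _ m "\<lambda>k. coprime k m"] by simp
  qed
  have e1: "m div p = q * r" "m div q = r * p" "m div r = p * q" "m div m = 1"
    "m div (q*r) = p" "m div (r*p) = q" "m div (p*q) = r" "m div 1 = m"
    unfolding m_def using p0 by auto
  have dv: "p dvd m" "q dvd m" "r dvd m" "m dvd m" "q*r dvd m" "r*p dvd m" "p*q dvd m" "1 dvd m"
    unfolding m_def by auto
  have LHS: "cyclo m * XX (q*r) * XX (r*p) * XX (p*q) * XX 1 =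
     (\<Prod>k<m. f k ^ ((if coprime k m then 1 else 0) + (if p dvd k then 1 else 0) +
        (if q dvd k then 1 else 0) + (if r dvd k then 1 else 0) + (if m dvd k then 1 else 0)))"
    using XXs[of p] XXs[of q] XXs[of r] XXs[of m] p0 m0 dv e1 cyc
    by (simp add: prod.distrib[symmetric] power_add)
  have RHS: "XX m * XX r * XX p * XX q =
     (\<Prod>k<m. f k ^ ((if 1 dvd k then 1 else 0) + (if p*q dvd k then 1 else 0) +
        (if q*r dvd k then 1 else 0) + (if r*p dvd k then 1 else 0)))"
    using XXs[of 1] XXs[of "p*q"] XXs[of "q*r"] XXs[of "r*p"] p0 m0 dv e1
    by (simp add: prod.distrib[symmetric] power_add mult_ac)
  show ?thesis unfolding LHS RHS
    by (rule prod.cong[OF refl]) (simp add: cop dpq dqr drp dm)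
qed



lemma geo_monom:
  "(monom (1::complex) a - 1) * (\<Sum>i<n. monom 1 (i*a)) = monom 1 (n*a) - 1"
proof (induction n)
  case 0 thus ?case by simp
next
  case (Suc n)
  have "(monom (1::complex) a - 1) * (\<Sum>i<Suc n. monom 1 (i*a))
      = (monom 1 a - 1) * (\<Sum>i<n. monom 1 (i*a)) + (monom 1 a - 1) * monom 1 (n*a)"
    by (simp add: algebra_simps)
  also have "\<dots> = monom 1 (n*a) - 1 + (monom 1 a - 1) * monom 1 (n*a)"
    by (simp only: Suc.IH)
  also have "(monom (1::complex) a - 1) * monom 1 (n*a) = monom 1 (Suc n * a) - monom 1 (n*a)"
    by (simp add: algebra_simps mult_monom)
  finally show ?case by simp
qed

definition UU :: "nat \<Rightarrow> nat \<Rightarrow> nat \<Rightarrow> complex poly" where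
  "UU p q r = (\<Sum>i<p. monom 1 (i*(q*r))) * (\<Sum>j<q. monom 1 (j*(r*p))) * (\<Sum>l<r. monom 1 (l*(p*q)))"

definition uu :: "nat \<Rightarrow> nat \<Rightarrow> nat \<Rightarrow> int \<Rightarrow> complex" where
  "uu p q r k = (if k < 0 then 0 else coeff (UU p q r) (nat k))"

lemma coeff_monom_mult_int:
  "coeff (monom 1 s * (P :: complex poly)) n = (if int n - int s < 0 then 0 else coeff P (nat (int n - int s)))"
  by (simp add: coeff_monom_mult nat_diff_distrib)

lemma coeff_main:
  fixes p q r n :: nat
  assumes "prime p" "prime q" "prime r" "p \<noteq> q" "q \<noteq> r" "p \<noteq> r"
    and "1 \<le> n" "n < p * q * r"
  shows "cyc_coeff (p*q*r) n - cyc_coeff (p*q*r) (n - 1) =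
     uu p q r (int n) - uu p q r (int n - int p) - uu p q r (int n - int q) - uu p q r (int n - int r)
     + uu p q r (int n - int p - int q) + uu p q r (int n - int q - int r) + uu p q r (int n - int r - int p)
     - uu p q r (int n - int p - int q - int r)"
proof -
  define m where "m = p * q * r"
  define XX where "XX e = monom (1::complex) e - 1" for e
  define U where "U = UU p q r"
  have id: "cyclo m * XX (q*r) * XX (r*p) * XX (p*q) * XX 1 = XX m * XX r * XX p * XX q"
    using cyclo_identity[OF assms(1-6)] unfolding m_def XX_def by simp
  have g1: "XX (q*r) * (\<Sum>i<p. monom 1 (i*(q*r))) = XX m"
       and g2: "XX (r*p) * (\<Sum>j<q. monom 1 (j*(r*p))) = XX m"
       and g3: "XX (p*q) * (\<Sum>l<r. monom 1 (l*(p*q))) = XX m"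
    unfolding XX_def m_def by (simp_all add: geo_monom mult_ac)
  have "cyclo m * XX 1 * XX m * (XX m * XX m) = XX m * (XX r * XX p * XX q * U)"
  proof -
    have "cyclo m * XX 1 * XX m * (XX m * XX m) =
       cyclo m * XX 1 * (XX (q*r) * (\<Sum>i<p. monom 1 (i*(q*r)))) * ((XX (r*p) * (\<Sum>j<q. monom 1 (j*(r*p))))
         * (XX (p*q) * (\<Sum>l<r. monom 1 (l*(p*q)))))"
      by (simp only: g1 g2 g3)
    also have "\<dots> = (cyclo m * XX (q*r) * XX (r*p) * XX (p*q) * XX 1) * U"
      unfolding U_def UU_def by (simp add: mult_ac)
    also have "\<dots> = XX m * XX r * XX p * XX q * U" by (simp only: id)
    also have "\<dots> = XX m * (XX r * XX p * XX q * U)" by (simp add: mult_ac)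
    finally show ?thesis .
  qed
  moreover have "XX m \<noteq> 0"
  proof
    assume "XX m = 0"
    hence "coeff (XX m) 0 = 0" by simp
    moreover have "m > 0" using assms unfolding m_def by linarith
    ultimately show False unfolding XX_def by simp
  qed
  ultimately have key: "cyclo m * XX 1 * (XX m * XX m) = XX r * XX p * XX q * U"
    by (simp add: mult_ac)
  have m0: "n < m" using assms unfolding m_def by simp
  have two: "coeff (2 * P) k = 2 * coeff P k" for P :: "complex poly" and k
    by (simp only: mult_2 coeff_add)
  have L: "coeff (cyclo m * XX 1 * (XX m * XX m)) n = cyc_coeff m (n - 1) - cyc_coeff m n"
  proof -
    have sq: "XX m * XX m = monom 1 (m + m) - 2 * monom 1 m + 1"
      unfolding XX_def by (simp add: algebra_simps mult_monom)
    have "cyclo m * XX 1 * (XX m * XX m) = (cyclo m * XX 1) * (monom 1 (m + m) - 2 * monom 1 m + 1)"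
      by (simp only: sq)
    also have "\<dots> = monom 1 (m+m) * (cyclo m * XX 1)
         - 2 * (monom 1 m * (cyclo m * XX 1)) + cyclo m * XX 1"
      by (simp add: algebra_simps del: XX_def)
    finally have "cyclo m * XX 1 * (XX m * XX m) = monom 1 (m+m) * (cyclo m * XX 1)
         - 2 * (monom 1 m * (cyclo m * XX 1)) + cyclo m * XX 1" .
    moreover have "cyclo m * XX 1 = monom 1 1 * cyclo m - cyclo m"
      unfolding XX_def by (simp add: algebra_simps)
    ultimately have "coeff (cyclo m * XX 1 * (XX m * XX m)) n = coeff (monom 1 1 * cyclo m) n - coeff (cyclo m) n"
      using m0 by (simp add: coeff_monom_mult two)
    thus ?thesis using assms(7) by (simp add: coeff_monom_mult cyc_coeff_def)
  qed
  have E: "XX r * XX p * XX q * U = monom 1 (p+q+r) * U - monom 1 (p+q) * U - monom 1 (q+r) * U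
      - monom 1 (r+p) * U + monom 1 p * U + monom 1 q * U + monom 1 r * U - U"
    unfolding XX_def by (simp add: algebra_simps mult_monom)
  have cU: "coeff (monom 1 s * U) n = uu p q r (int n - int s)" for s
    unfolding uu_def U_def coeff_monom_mult_int by simp
  have R: "coeff (XX r * XX p * XX q * U) n =
     uu p q r (int n - int p - int q - int r) - uu p q r (int n - int p - int q)
     - uu p q r (int n - int q - int r) - uu p q r (int n - int r - int p)
     + uu p q r (int n - int p) + uu p q r (int n - int q) + uu p q r (int n - int r) - uu p q r (int n)"
  proof -
    have "coeff (XX r * XX p * XX q * U) n = coeff (monom 1 (p+q+r) * U) n - coeff (monom 1 (p+q) * U) n
      - coeff (monom 1 (q+r) * U) n - coeff (monom 1 (r+p) * U) n + coeff (monom 1 p * U) n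
      + coeff (monom 1 q * U) n + coeff (monom 1 r * U) n - coeff U n"
      unfolding E by simp
    also have "coeff U n = uu p q r (int n)" unfolding uu_def U_def by simp
    finally show ?thesis unfolding cU by (simp add: algebra_simps)
  qed
  have C: "cyc_coeff m (n - 1) - cyc_coeff m n = coeff (XX r * XX p * XX q * U) n"
    using key L by metis
  have "cyc_coeff m n - cyc_coeff m (n - 1) = - (cyc_coeff m (n - 1) - cyc_coeff m n)" by simp
  also have "\<dots> = - coeff (XX r * XX p * XX q * U) n" by (simp only: C)
  also have "\<dots> = uu p q r (int n) - uu p q r (int n - int p) - uu p q r (int n - int q) - uu p q r (int n - int r)
     + uu p q r (int n - int p - int q) + uu p q r (int n - int q - int r) + uu p q r (int n - int r - int p)
     - uu p q r (int n - int p - int q - int r)" unfolding R by (simp add: algebra_simps)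
  finally show ?thesis unfolding m_def .
qed



lemma int_bound_lo: "(m::int) > 0 \<Longrightarrow> m * t > - m \<Longrightarrow> t \<ge> 0"
proof (rule ccontr)
  assume "m > 0" "m * t > - m" "\<not> t \<ge> 0"
  hence "t \<le> -1" by simp
  hence "m * t \<le> m * (-1)" using \<open>m > 0\<close> by (intro mult_left_mono) auto
  thus False using \<open>m * t > - m\<close> by simp
qed

lemma int_bound_hi: "(m::int) > 0 \<Longrightarrow> m * t < 3 * m \<Longrightarrow> t \<le> 2"
proof (rule ccontr)
  assume "m > 0" "m * t < 3 * m" "\<not> t \<le> 2"
  hence "t \<ge> 3" by simp
  hence "m * 3 \<le> m * t" using \<open>m > 0\<close> by (intro mult_left_mono) auto
  thus False using \<open>m * t < 3 * m\<close> by simp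
qed

context trip
begin

abbreviation "m \<equiv> p * q * r"

definition tt :: "int \<Rightarrow> int" where
  "tt k = (Sx (abc p q r k) - k) div int m"

lemma pos: "p > 0" "q > 0" "r > 0" "int m > 0"
  using pp pq pr prime_gt_0_nat by auto

lemma dvdm: "int m dvd Sx (abc p q r k) - k"
  using abc_spec(2)[of k] by (simp add: cong_iff_dvd_diff dvd_diff_commute)

lemma tt_eq: "Sx (abc p q r k) - k = int m * tt k"
  using dvdm[of k] unfolding tt_def by simp

lemma Fk_tt: "Fk p q r k = real_of_int (tt k)"
proof -
  obtain a b c where abc: "abc p q r k = (a,b,c)" by (cases "abc p q r k") auto
  have "Fk p q r k = real_of_int a / real p + real_of_int b / real q + real_of_int c / real r
      - real_of_int k / real m" unfolding Fk_def abc by simp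
  also have "\<dots> = real_of_int (Sx (abc p q r k) - k) / real m"
    unfolding abc Sx_def using pos by (simp add: field_simps)
  also have "\<dots> = real_of_int (tt k)" unfolding tt_eq using pos by simp
  finally show ?thesis .
qed

lemma Sx_bounds: "0 \<le> Sx (abc p q r k)"
  "Sx (abc p q r k) \<le> 3 * int m - int (q*r) - int (r*p) - int (p*q)"
proof -
  obtain a b c where abc: "abc p q r k = (a,b,c)" by (cases "abc p q r k") auto
  have R: "0 \<le> a" "a \<le> int p - 1" "0 \<le> b" "b \<le> int q - 1" "0 \<le> c" "c \<le> int r - 1"
    using abc_spec(1)[of k] unfolding abc inR_def by auto
  have "a * (int q * int r) \<le> (int p - 1) * (int q * int r)"
    using R by (intro mult_right_mono) auto
  moreover have "b * (int r * int p) \<le> (int q - 1) * (int r * int p)"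
    using R by (intro mult_right_mono) auto
  moreover have "c * (int p * int q) \<le> (int r - 1) * (int p * int q)"
    using R by (intro mult_right_mono) auto
  ultimately show "Sx (abc p q r k) \<le> 3 * int m - int (q*r) - int (r*p) - int (p*q)"
    unfolding abc Sx_def by (simp add: algebra_simps)
  show "0 \<le> Sx (abc p q r k)" unfolding abc Sx_def using R by simp
qed

lemma tt_range:
  assumes "k < int m" "k \<ge> 1 - int p - int q - int r"
  shows "tt k \<in> {0,1,2}"
proof -
  have s: "int q \<le> int (p*q)" "int r \<le> int (q*r)" "int p \<le> int (r*p)"
    using pos by simp_all
  have "int m * tt k > - int m" using tt_eq[of k] Sx_bounds(1)[of k] assms by linarith
  hence "tt k \<ge> 0" using int_bound_lo pos by blast
  moreover have "int m * tt k < 3 * int m" using tt_eq[of k] Sx_bounds(2)[of k] assms s by linarith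
  hence "tt k \<le> 2" using int_bound_hi pos by blast
  ultimately show ?thesis by auto
qed


definition EE :: "nat \<times> nat \<times> nat \<Rightarrow> nat" where
  "EE t = fst t*(q*r) + fst(snd t)*(r*p) + snd(snd t)*(p*q)"

abbreviation "TT \<equiv> {..<p} \<times> {..<q} \<times> {..<r}"

lemma UU_sum: "UU p q r = (\<Sum>t\<in>TT. monom 1 (EE t))"
proof -
  define X where "X i = (monom (1::complex) (i*(q*r)))" for i
  define Y where "Y i = (monom (1::complex) (i*(r*p)))" for i
  define Z where "Z i = (monom (1::complex) (i*(p*q)))" for i
  have "UU p q r = (\<Sum>i<p. X i) * ((\<Sum>j<q. Y j) * (\<Sum>l<r. Z l))"
    unfolding UU_def X_def Y_def Z_def by (simp only: mult.assoc)
  also have "(\<Sum>j<q. Y j) * (\<Sum>l<r. Z l) = (\<Sum>j<q. \<Sum>l<r. Y j * Z l)" by (rule sum_product)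
  also have "(\<Sum>i<p. X i) * (\<Sum>j<q. \<Sum>l<r. Y j * Z l) = (\<Sum>i<p. \<Sum>j<q. \<Sum>l<r. X i * (Y j * Z l))"
    by (subst sum_product) (simp add: sum_distrib_left)
  also have "\<dots> = (\<Sum>i<p. \<Sum>j<q. \<Sum>l<r. monom 1 (EE (i,j,l)))"
    unfolding X_def Y_def Z_def by (simp add: mult_monom EE_def add.assoc)
  also have "\<dots> = (\<Sum>t\<in>TT. monom 1 (EE t))"
    by (simp add: sum.cartesian_product)
  finally show ?thesis .
qed

lemma coeff_UU: "coeff (UU p q r) j = of_nat (card {t\<in>TT. EE t = j})"
proof -
  have "coeff (UU p q r) j = (\<Sum>t\<in>TT. if EE t = j then 1 else 0)"
    unfolding UU_sum coeff_sum by (simp add: coeff_monom)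
  also have "\<dots> = (\<Sum>t\<in>{t\<in>TT. EE t = j}. 1)" by (rule sum.inter_filter[symmetric]) simp
  finally show ?thesis by simp
qed

lemma EE_Sx: "int (EE (i,j,l)) = Sx (int i, int j, int l)"
  unfolding EE_def Sx_def by (simp add: algebra_simps)

lemma abc_unique: assumes "inR t" "[k = Sx t] (mod int (p*q*r))" shows "t = abc p q r k"
proof -
  from abc_ex1[of k] obtain t0 where t0: "inR t0 \<and> [k = Sx t0] (mod int (p*q*r))"
    and u: "\<And>t'. inR t' \<and> [k = Sx t'] (mod int (p*q*r)) \<Longrightarrow> t' = t0" by (elim ex1E) blast
  have "t = t0" using u assms by blast
  moreover have "abc p q r k = t0" using u abc_spec[of k] by blast
  ultimately show ?thesis by simp
qed

lemma uu_tt: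
  assumes "k < int m"
  shows "uu p q r k = (if tt k = 0 then 1 else 0)"
proof (cases "k < 0")
  case True
  have "tt k \<noteq> 0" using tt_eq[of k] Sx_bounds(1)[of k] True by auto
  thus ?thesis using True unfolding uu_def by simp
next
  case False
  obtain a b c where abc: "abc p q r k = (a,b,c)" by (cases "abc p q r k") auto
  have R: "inR (a,b,c)" using abc_spec(1)[of k] abc by simp
  have S: "{t\<in>TT. EE t = nat k} = (if tt k = 0 then {(nat a, nat b, nat c)} else {})"
  proof (cases "tt k = 0")
    case T: True
    have Sk: "Sx (a,b,c) = k" using tt_eq[of k] T abc by simp
    have "{t\<in>TT. EE t = nat k} = {(nat a, nat b, nat c)}"
    proof (intro set_eqI iffI)
      fix t assume t: "t \<in> {t\<in>TT. EE t = nat k}"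
      obtain i j l where tij: "t = (i,j,l)" by (cases t) auto
      have "inR (int i, int j, int l)" using t tij unfolding inR_def by auto
      moreover have "[k = Sx (int i, int j, int l)] (mod int m)"
        using t tij EE_Sx[of i j l] False by simp
      ultimately have "(int i, int j, int l) = abc p q r k"
        by (rule abc_unique)
      thus "t \<in> {(nat a, nat b, nat c)}" using tij abc by auto
    next
      fix t assume "t \<in> {(nat a, nat b, nat c)}"
      hence t: "t = (nat a, nat b, nat c)" by simp
      have "int (EE t) = Sx (a,b,c)" unfolding t EE_Sx using R unfolding inR_def by simp
      thus "t \<in> {t\<in>TT. EE t = nat k}" using t R Sk False unfolding inR_def by auto
    qed
    thus ?thesis using T by simp
  next
    case F: False
    have "{t\<in>TT. EE t = nat k} = {}"
    proof (rule ccontr)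
      assume "{t\<in>TT. EE t = nat k} \<noteq> {}"
      then obtain i j l where t: "(i,j,l) \<in> TT" "EE (i,j,l) = nat k" by auto
      have "inR (int i, int j, int l)" using t unfolding inR_def by auto
      moreover have Sk: "Sx (int i, int j, int l) = k" using t EE_Sx[of i j l] False by simp
      ultimately have "(int i, int j, int l) = abc p q r k"
        using abc_unique by simp
      hence "Sx (abc p q r k) - k = 0" using Sk by simp
      hence "tt k = 0" using tt_eq[of k] pos by simp
      thus False using F by simp
    qed
    thus ?thesis using F by simp
  qed
  show ?thesis using False unfolding uu_def coeff_UU S by simp
qed

definition Ak :: "int \<Rightarrow> int" where "Ak k = fst (abc p q r k)"
definition Bk :: "int \<Rightarrow> int" where "Bk k = fst (snd (abc p q r k))"
definition Ck :: "int \<Rightarrow> int" where "Ck k = snd (snd (abc p q r k))"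

lemma Sx_ABC: "Sx (abc p q r k) = Ak k * int q * int r + Bk k * int r * int p + Ck k * int p * int q"
  unfolding Ak_def Bk_def Ck_def Sx_def by (simp add: case_prod_beta)

lemma ABC_props:
  "[x = Ak x * int q * int r] (mod int p)" "0 \<le> Ak x" "Ak x < int p"
  "[x = Bk x * int r * int p] (mod int q)" "0 \<le> Bk x" "Bk x < int q"
  "[x = Ck x * int p * int q] (mod int r)" "0 \<le> Ck x" "Ck x < int r"
proof -
  obtain a b c where abc: "abc p q r x = (a,b,c)" by (cases "abc p q r x") auto
  have m: "[x = Sx (a,b,c)] (mod int p)" "[x = Sx (a,b,c)] (mod int q)" "[x = Sx (a,b,c)] (mod int r)"
    using abc_spec(2)[of x] abc unfolding mpos by (metis cong_modulus_mult mult.commute mult.assoc)+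
  show "[x = Ak x * int q * int r] (mod int p)"
    using m Sx_mod(1)[of a b c] abc unfolding Ak_def by (auto intro: cong_trans)
  show "[x = Bk x * int r * int p] (mod int q)"
    using m Sx_mod(2)[of a b c] abc unfolding Bk_def by (auto intro: cong_trans)
  show "[x = Ck x * int p * int q] (mod int r)"
    using m Sx_mod(3)[of a b c] abc unfolding Ck_def by (auto intro: cong_trans)
  show "0 \<le> Ak x" "Ak x < int p" "0 \<le> Bk x" "Bk x < int q" "0 \<le> Ck x" "Ck x < int r"
    using abc_spec(1)[of x] abc unfolding inR_def Ak_def Bk_def Ck_def by auto
qed

lemma A_per: assumes "[k = k'] (mod int p)" shows "Ak k = Ak k'"
proof -
  have "[Ak k * int q * int r = Ak k' * int q * int r] (mod int p)"
    using ABC_props(1)[of k] ABC_props(1)[of k'] assms by (meson cong_sym cong_trans)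
  thus ?thesis using uniq_a[OF pp pq pr dpq dpr] ABC_props by blast
qed

lemma B_per: assumes "[k = k'] (mod int q)" shows "Bk k = Bk k'"
proof -
  have "[Bk k * int r * int p = Bk k' * int r * int p] (mod int q)"
    using ABC_props(4)[of k] ABC_props(4)[of k'] assms by (meson cong_sym cong_trans)
  thus ?thesis using uniq_a[OF pq pr pp dqr] dpq ABC_props by metis
qed

lemma C_per: assumes "[k = k'] (mod int r)" shows "Ck k = Ck k'"
proof -
  have "[Ck k * int p * int q = Ck k' * int p * int q] (mod int r)"
    using ABC_props(7)[of k] ABC_props(7)[of k'] assms by (meson cong_sym cong_trans)
  thus ?thesis using uniq_a[OF pr pp pq] dpr dqr ABC_props by metis
qed

lemma sum_eq:
  fixes n :: int
  shows "tt n + tt (n - int p - int q) + tt (n - int q - int r) + tt (n - int r - int p)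
       = tt (n - int p) + tt (n - int q) + tt (n - int r) + tt (n - int p - int q - int r)"
proof -
  have a: "Ak (n - int p) = Ak n" "Ak (n - int p - int q) = Ak (n - int q)"
     "Ak (n - int r - int p) = Ak (n - int r)" "Ak (n - int p - int q - int r) = Ak (n - int q - int r)"
    by (rule A_per; simp add: cong_iff_dvd_diff)+
  have b: "Bk (n - int q) = Bk n" "Bk (n - int p - int q) = Bk (n - int p)"
     "Bk (n - int q - int r) = Bk (n - int r)" "Bk (n - int p - int q - int r) = Bk (n - int r - int p)"
    by (rule B_per; simp add: cong_iff_dvd_diff)+
  have c: "Ck (n - int r) = Ck n" "Ck (n - int q - int r) = Ck (n - int q)"
     "Ck (n - int r - int p) = Ck (n - int p)" "Ck (n - int p - int q - int r) = Ck (n - int p - int q)"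
    by (rule C_per; simp add: cong_iff_dvd_diff)+
  have "int m * (tt n + tt (n - int p - int q) + tt (n - int q - int r) + tt (n - int r - int p))
     = int m * (tt (n - int p) + tt (n - int q) + tt (n - int r) + tt (n - int p - int q - int r))"
    unfolding distrib_left tt_eq[symmetric] Sx_ABC a b c by (simp add: algebra_simps)
  thus ?thesis using pos by simp
qed

end



lemma list_cnt:
  "\<forall>x\<in>set xs. x \<in> {0,1,2} \<Longrightarrow>
    real (Ncount 0 xs) + real (Ncount 1 xs) + real (Ncount 2 xs) = real (length xs) \<and>
    sum_list xs = real (Ncount 1 xs) + 2 * real (Ncount 2 xs)"
  by (induction xs) (auto simp: Ncount_def)

lemma Ncount4: "Ncount d [a,b,c,e] = of_bool (a=d) + of_bool (b=d) + of_bool (c=d) + of_bool (e=d)"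
  by (simp add: Ncount_def)

lemma lin4:
  fixes a0 a1 a2 b0 b1 b2 s t :: real
  assumes "a0 + a1 + a2 = 4" "s = a1 + 2 * a2" "b0 + b1 + b2 = 4" "t = b1 + 2 * b2" "s = t"
  shows "(b1 - a1) / 2 = a0 - b0" "a2 - b2 = a0 - b0"
proof -
  show "(b1 - a1) / 2 = a0 - b0" using assms by (simp add: field_simps)
  show "a2 - b2 = a0 - b0" using assms by simp
qed

theorem lemma6:
  fixes p q r n :: nat
  assumes "prime p" "prime q" "prime r"
    and "p \<noteq> q" "q \<noteq> r" "p \<noteq> r"
    and "p < q" "p < r"
    and "1 \<le> n" "n < p * q * r"
  defines "Splus \<equiv> [Fk p q r (int n), Fk p q r (int n - int p - int q),
                     Fk p q r (int n - int q - int r), Fk p q r (int n - int r - int p)]"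
    and "Sminus \<equiv> [Fk p q r (int n - int p), Fk p q r (int n - int q),
                     Fk p q r (int n - int r), Fk p q r (int n - int p - int q - int r)]"
  shows "cyc_coeff (p * q * r) n - cyc_coeff (p * q * r) (n - 1)
           = complex_of_real ((real (Ncount 1 Sminus) - real (Ncount 1 Splus)) / 2)
    \<and> cyc_coeff (p * q * r) n - cyc_coeff (p * q * r) (n - 1)
           = of_int (int (Ncount 0 Splus) - int (Ncount 0 Sminus))
    \<and> cyc_coeff (p * q * r) n - cyc_coeff (p * q * r) (n - 1)
           = of_int (int (Ncount 2 Splus) - int (Ncount 2 Sminus))"
proof -
  interpret trip p q r using assms(1-6) by unfold_locales
  define d where "d = cyc_coeff (p * q * r) n - cyc_coeff (p * q * r) (n - 1)"
  define k1 where "k1 = int n"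
  define k2 where "k2 = int n - int p - int q"
  define k3 where "k3 = int n - int q - int r"
  define k4 where "k4 = int n - int r - int p"
  define k5 where "k5 = int n - int p"
  define k6 where "k6 = int n - int q"
  define k7 where "k7 = int n - int r"
  define k8 where "k8 = int n - int p - int q - int r"
  have lt: "k1 < int m" "k2 < int m" "k3 < int m" "k4 < int m" "k5 < int m" "k6 < int m" "k7 < int m" "k8 < int m"
    using assms(10) unfolding k1_def k2_def k3_def k4_def k5_def k6_def k7_def k8_def by linarith+
  have ge: "k1 \<ge> 1 - int p - int q - int r" "k2 \<ge> 1 - int p - int q - int r"
    "k3 \<ge> 1 - int p - int q - int r" "k4 \<ge> 1 - int p - int q - int r"
    "k5 \<ge> 1 - int p - int q - int r" "k6 \<ge> 1 - int p - int q - int r"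
    "k7 \<ge> 1 - int p - int q - int r" "k8 \<ge> 1 - int p - int q - int r"
    using assms(9) unfolding k1_def k2_def k3_def k4_def k5_def k6_def k7_def k8_def by linarith+
  have Sp: "Splus = [real_of_int (tt k1), real_of_int (tt k2), real_of_int (tt k3), real_of_int (tt k4)]"
    unfolding Splus_def Fk_tt k1_def k2_def k3_def k4_def ..
  have Sm: "Sminus = [real_of_int (tt k5), real_of_int (tt k6), real_of_int (tt k7), real_of_int (tt k8)]"
    unfolding Sminus_def Fk_tt k5_def k6_def k7_def k8_def ..
  have rng: "tt k1 \<in> {0,1,2}" "tt k2 \<in> {0,1,2}" "tt k3 \<in> {0,1,2}" "tt k4 \<in> {0,1,2}"
    "tt k5 \<in> {0,1,2}" "tt k6 \<in> {0,1,2}" "tt k7 \<in> {0,1,2}" "tt k8 \<in> {0,1,2}"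
    using tt_range lt ge by blast+
  have cp: "\<forall>x\<in>set Splus. x \<in> {0,1,2}" and cm: "\<forall>x\<in>set Sminus. x \<in> {0,1,2}"
    unfolding Sp Sm using rng by auto
  have sums: "sum_list Splus = sum_list Sminus"
  proof -
    have "tt k1 + tt k2 + tt k3 + tt k4 = tt k5 + tt k6 + tt k7 + tt k8"
      using sum_eq[of "int n"] unfolding k1_def k2_def k3_def k4_def k5_def k6_def k7_def k8_def .
    hence "real_of_int (tt k1 + tt k2 + tt k3 + tt k4) = real_of_int (tt k5 + tt k6 + tt k7 + tt k8)"
      by simp
    thus ?thesis unfolding Sp Sm by simp
  qed
  have d_eq: "d = uu p q r k1 - uu p q r k5 - uu p q r k6 - uu p q r k7
     + uu p q r k2 + uu p q r k3 + uu p q r k4 - uu p q r k8"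
    unfolding d_def k1_def k2_def k3_def k4_def k5_def k6_def k7_def k8_def
    by (rule coeff_main[OF assms(1-6) assms(9) assms(10)])
  have N0p: "Ncount 0 Splus = of_bool (tt k1 = 0) + of_bool (tt k2 = 0) + of_bool (tt k3 = 0) + of_bool (tt k4 = 0)"
    unfolding Sp Ncount4 by simp
  have N0m: "Ncount 0 Sminus = of_bool (tt k5 = 0) + of_bool (tt k6 = 0) + of_bool (tt k7 = 0) + of_bool (tt k8 = 0)"
    unfolding Sm Ncount4 by simp
  have d0: "d = of_int (int (Ncount 0 Splus) - int (Ncount 0 Sminus))"
    unfolding d_eq N0p N0m using uu_tt lt by (simp add: of_bool_def)
  have lp: "length Splus = 4" "length Sminus = 4" unfolding Sp Sm by simp_all
  have f1: "real (Ncount 0 Splus) + real (Ncount 1 Splus) + real (Ncount 2 Splus) = 4"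
    "sum_list Splus = real (Ncount 1 Splus) + 2 * real (Ncount 2 Splus)"
    "real (Ncount 0 Sminus) + real (Ncount 1 Sminus) + real (Ncount 2 Sminus) = 4"
    "sum_list Sminus = real (Ncount 1 Sminus) + 2 * real (Ncount 2 Sminus)"
    using list_cnt[OF cp] list_cnt[OF cm] lp by auto
  have r1: "(real (Ncount 1 Sminus) - real (Ncount 1 Splus)) / 2 = real (Ncount 0 Splus) - real (Ncount 0 Sminus)"
    by (rule lin4[OF f1 sums])
  have r2: "real (Ncount 2 Splus) - real (Ncount 2 Sminus) = real (Ncount 0 Splus) - real (Ncount 0 Sminus)"
    by (rule lin4[OF f1 sums])
  have i2: "int (Ncount 2 Splus) - int (Ncount 2 Sminus) = int (Ncount 0 Splus) - int (Ncount 0 Sminus)"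
    using r2 by linarith
  have c1: "complex_of_real ((real (Ncount 1 Sminus) - real (Ncount 1 Splus)) / 2)
      = of_int (int (Ncount 0 Splus) - int (Ncount 0 Sminus))"
    unfolding r1 by simp
  show ?thesis using d0 c1 i2 unfolding d_def by simp
qed

end
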